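(* The set $\mathbb Q^+$ of positive rational numbers, canonically arranged as below, has size sequence $$\sigma(\mathbb Q^+)=(\alpha+1)\cdot\sigma(\mathbb I),\quad\text{i.e. } \sigma_n(\mathbb Q^+)=(n+1)\Phi(n),$$ where $\Phi(n)=\sum_{i=1}^n\varphi(i)$ with $\varphi$ Euler's totient function; moreover $\sigma(\mathbb Q^+)\approx_\mathcal F\alpha^3$, and more precisely $$\tfrac{3}{10}(\alpha^3+\alpha^2)<_\mathcal F\sigma(\mathbb Q^+)<_\mathcal F\frac{\alpha^3-\alpha}{2}.$$
   Context: $\mathbb N=\{1,2,\dots\}$. Every positive rational is uniquely written as a mixed fraction $p+k/m$ with $p\in\mathbb N_0$, $k,m\in\mathbb N$, $\gcd(k,m)=1$, $k\le m$, and is represented by the triple $(p,k,m)$; thus $\mathbb Q^+=\mathbb N_0\times\mathbb I$ where $\mathbb I=(0,1]\cap\mathbb Q$ is represented by the pairs $(k,m)$. Arrangements: $\mathbb N_0$ has first component $\{0,1\}$ and $n$-th component $\{n\}$ for $n\ge2$; $\mathbb I$ has $n$-th component $\{(k,n):\gcd(k,n)=1,k\le n\}$; a product $A\times B$ has $n$-th component $\bigcup\{A_i\times B_j:\max\{i,j\}=n\}$. Hence the triple $(p,k,m)$ lies in component $\max\{\ell(p),m\}$ where $\ell(0)=1$ and $\ell(p)=p$ for $p\ge1$. The size sequence is $\sigma(A)=(\sigma_n(A))_n$, $\sigma_n(A)=|A_1|+\dots+|A_n|$. $\alpha=(n)_n$; operations on sequences are componentwise; constants are identified with constant sequences. $(a_n)<_\mathcal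 F(b_n)$ iff $a_n<b_n$ for all sufficiently large $n$; $(a_n)\approx_\mathcal F(b_n)$ iff some $k\in\mathbb N$ has $ka_n\ge b_n$ for all large $n$ and some $k$ has $kb_n\ge a_n$ for all large $n$. *)

theory Defs
  imports "HOL-Number_Theory.Number_Theory"
begin

text \<open>An arrangement is a sequence of components A 1, A 2, ... (index 0 unused).\<close>

definition N0_arr :: "nat \<Rightarrow> nat set" where
  "N0_arr n = (if n = 1 then {0, 1} else if n \<ge> 2 then {n} else {})"

text \<open>The unit-interval rationals (0,1] as pairs (k,m), gcd k m = 1, 1 <= k <= m;
  the n-th component consists of those with denominator n.\<close>
definition I_arr :: "nat \<Rightarrow> (nat \<times> nat) set" where
  "I_arr n = {(k, m). m = n \<and> 1 \<le> k \<and> k \<le> m \<and> coprime k m}"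

definition prod_arr :: "(nat \<Rightarrow> 'a set) \<Rightarrow> (nat \<Rightarrow> 'b set) \<Rightarrow> nat \<Rightarrow> ('a \<times> 'b) set" where
  "prod_arr A B n = \<Union>{A i \<times> B j | i j. 1 \<le> i \<and> 1 \<le> j \<and> max i j = n}"

text \<open>Q+ = N0 x I, triples (p,(k,m)) standing for p + k/m.\<close>
definition Qpos_arr :: "nat \<Rightarrow> (nat \<times> nat \<times> nat) set" where
  "Qpos_arr = prod_arr N0_arr I_arr"

definition size_seq :: "(nat \<Rightarrow> 'a set) \<Rightarrow> nat \<Rightarrow> nat" where
  "size_seq A n = (\<Sum>i = 1..n. card (A i))"

definition F_less :: "(nat \<Rightarrow> real) \<Rightarrow> (nat \<Rightarrow> real) \<Rightarrow> bool" where
  "F_less a b \<longleftrightarrow> (\<forall>\<^sub>F n in sequentially. a n < b n)"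

definition F_approx :: "(nat \<Rightarrow> real) \<Rightarrow> (nat \<Rightarrow> real) \<Rightarrow> bool" where
  "F_approx a b \<longleftrightarrow>
     (\<exists>k::nat. k \<ge> 1 \<and> (\<forall>\<^sub>F n in sequentially. real k * a n \<ge> b n)) \<and>
     (\<exists>k::nat. k \<ge> 1 \<and> (\<forall>\<^sub>F n in sequentially. real k * b n \<ge> a n))"

end

theory Submission
  imports Defs "HOL-Analysis.Harmonic_Numbers" "HOL-Real_Asymp.Real_Asymp"
begin


lemma card_I: "card (I_arr n) = totient n"
proof -
  have "I_arr n = (\<lambda>k. (k, n)) ` totatives n"
    by (auto simp: I_arr_def totatives_def)
  moreover have "inj_on (\<lambda>k. (k, n)) (totatives n)" by (auto simp: inj_on_def)
  ultimately show ?thesis by (simp add: card_image totient_def)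
qed

lemma size_I: "size_seq I_arr n = (\<Sum>i = 1..n. totient i)"
  by (simp add: size_seq_def card_I)

lemma finite_I: "finite (I_arr n)"
  by (rule finite_subset[of _ "{0..n} \<times> {n}"]) (auto simp: I_arr_def)

lemma mem_Q: "(p, k, m) \<in> Qpos_arr i \<longleftrightarrow> (k, m) \<in> I_arr m \<and> max (max p 1) m = i"
proof
  assume "(p, k, m) \<in> Qpos_arr i"
  then obtain a b where ab: "1 \<le> a" "1 \<le> b" "max a b = i" "p \<in> N0_arr a" "(k, m) \<in> I_arr b"
    by (auto simp: Qpos_arr_def prod_arr_def)
  then have "a = max p 1" "b = m"
    by (auto simp: N0_arr_def I_arr_def split: if_splits)
  with ab show "(k, m) \<in> I_arr m \<and> max (max p 1) m = i" by auto
next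
  assume h: "(k, m) \<in> I_arr m \<and> max (max p 1) m = i"
  then have "m \<ge> 1" by (auto simp: I_arr_def)
  have "p \<in> N0_arr (max p 1)" by (auto simp: N0_arr_def)
  then have "(p, k, m) \<in> N0_arr (max p 1) \<times> I_arr m" using h by auto
  moreover have "N0_arr (max p 1) \<times> I_arr m \<in> {N0_arr a \<times> I_arr b | a b. 1 \<le> a \<and> 1 \<le> b \<and> max a b = i}"
    using h \<open>m \<ge> 1\<close> by (intro CollectI exI[of _ "max p 1"] exI[of _ m]) auto
  ultimately show "(p, k, m) \<in> Qpos_arr i"
    unfolding Qpos_arr_def prod_arr_def by blast
qed

lemma size_Q:
  assumes n: "n \<ge> 1"
  shows "size_seq Qpos_arr n = (n + 1) * size_seq I_arr n"
proof -
  define T where "T = (\<Union>m\<in>{1..n}. I_arr m)"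
  have fT: "finite T" by (auto simp: T_def finite_I)
  have cT: "card T = size_seq I_arr n"
    unfolding T_def size_seq_def
    apply (subst card_UN_disjoint)
       apply simp
      apply (simp add: finite_I)
     apply (auto simp: I_arr_def)
    done
  define U where "U = {0..n} \<times> T"
  have fU: "finite U" using fT by (simp add: U_def)
  have Qi: "Qpos_arr i = {x \<in> U. max (max (fst x) 1) (snd (snd x)) = i}" if "i \<in> {1..n}" for i
    using that by (auto simp: U_def T_def mem_Q I_arr_def)
  have eqU: "U = (\<Union>i\<in>{1..n}. {x \<in> U. max (max (fst x) 1) (snd (snd x)) = i})"
    using n by (auto simp: U_def T_def I_arr_def)
  have "card (\<Union>i\<in>{1..n}. {x \<in> U. max (max (fst x) 1) (snd (snd x)) = i}) = (\<Sum>i = 1..n. card {x \<in> U. max (max (fst x) 1) (snd (snd x)) = i})"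
    by (rule card_UN_disjoint) (use fU in auto)
  then have "card U = (\<Sum>i = 1..n. card {x \<in> U. max (max (fst x) 1) (snd (snd x)) = i})"
    using eqU by simp
  also have "\<dots> = size_seq Qpos_arr n"
    unfolding size_seq_def by (rule sum.cong) (auto simp: Qi)
  finally show ?thesis using cT by (simp add: U_def card_cartesian_product)
qed



definition P :: "nat \<Rightarrow> nat" where "P n = (\<Sum>i = 1..n. totient i)"

lemma P_Suc: "P (Suc n) = P n + totient (Suc n)"
  by (simp add: P_def)

lemma P_0: "P 0 = 0" by (simp add: P_def)

lemma P_div_Suc:
  "P (Suc n div d) = P (n div d) + (if d dvd Suc n then totient (Suc n div d) else 0)"
proof (cases "d dvd Suc n")
  case True
  then have "Suc n div d = Suc (n div d)"
    by (simp add: div_Suc dvd_eq_mod_eq_0)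
  then show ?thesis using True by (simp add: P_Suc)
next
  case False
  then have "Suc n div d = n div d"
    by (simp add: div_Suc dvd_eq_mod_eq_0)
  then show ?thesis using False by simp
qed

lemma div_div_self: "a dvd Suc n \<Longrightarrow> Suc n div (Suc n div a) = a"
  by (elim dvdE) auto

lemma dvd_Suc_ge1: "x dvd Suc n \<Longrightarrow> Suc 0 \<le> x"
  by (cases x) auto

lemma divsum_swap: "(\<Sum>d | d dvd Suc n. totient (Suc n div d)) = Suc n"
proof -
  have "(\<Sum>d | d dvd Suc n. totient (Suc n div d)) = (\<Sum>d | d dvd Suc n. totient d)"
    by (intro sum.reindex_bij_witness[of _ "(div) (Suc n)" "(div) (Suc n)"]) (auto simp: div_div_self)
  also have "\<dots> = Suc n" by (rule totient_divisor_sum)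
  finally show ?thesis .
qed

lemma P_identity: "(\<Sum>d = 1..n. P (n div d)) = (\<Sum>i = 1..n. i)"
proof (induction n)
  case 0
  then show ?case by simp
next
  case (Suc n)
  have "(\<Sum>d = 1..Suc n. P (Suc n div d))
      = (\<Sum>d = 1..Suc n. P (n div d)) + (\<Sum>d = 1..Suc n. (if d dvd Suc n then totient (Suc n div d) else 0))"
    by (simp add: P_div_Suc sum.distrib)
  also have "(\<Sum>d = 1..Suc n. P (n div d)) = (\<Sum>d = 1..n. P (n div d))"
    by (simp add: P_0)
  also have "(\<Sum>d = 1..Suc n. (if d dvd Suc n then totient (Suc n div d) else 0))
      = (\<Sum>d | d dvd Suc n. totient (Suc n div d))"
  proof -
    have "{d. d dvd Suc n} = {d \<in> {1..Suc n}. d dvd Suc n}"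
      by (auto dest: dvd_imp_le dvd_Suc_ge1)
    then show ?thesis by (simp only:) (rule sum.inter_filter[symmetric], simp)
  qed
  also have "\<dots> = Suc n" by (rule divsum_swap)
  finally show ?case using Suc by simp
qed



definition s2 :: "nat \<Rightarrow> real" where "s2 n = (\<Sum>d = 2..n. 1 / (real d)^2)"

lemma s2_Suc: "s2 (Suc n) = s2 n + (if n \<ge> 1 then 1 / (real (Suc n))^2 else 0)"
proof (cases "n \<ge> 1")
  case True
  then have "{2..Suc n} = insert (Suc n) {2..n}" by auto
  then show ?thesis using True by (simp add: s2_def)
next
  case False
  then have "n = 0" by simp
  then show ?thesis by (simp add: s2_def)
qed

lemma s2_tele:
  assumes "1 \<le> n" "n \<le> m"
  shows "s2 m + 1 / real m \<le> s2 n + 1 / real n"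
  using assms(2)
proof (induction m rule: dec_induct)
  case base
  then show ?case by simp
next
  case (step m)
  have m1: "m \<ge> 1" using assms step by simp
  have a: "1 / (real (Suc m))^2 \<le> 1 / (real m * real (Suc m))"
    using m1 by (intro divide_left_mono) (auto simp: power2_eq_square)
  have b: "1 / (real m * real (Suc m)) = 1 / real m - 1 / real (Suc m)"
    using m1 by (simp add: field_simps)
  have "1 / (real (Suc m))^2 + 1 / real (Suc m) \<le> 1 / real m"
    using a b by linarith
  then have "s2 (Suc m) + 1 / real (Suc m) \<le> s2 m + 1 / real m"
    using m1 by (simp add: s2_Suc)
  then show ?case using step by simp
qed

lemma s2_mono: "n \<le> m \<Longrightarrow> s2 n \<le> s2 m"
proof (induction m rule: dec_induct)
  case base then show ?case by simp
next
  case (step m)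
  have "s2 m \<le> s2 (Suc m)" by (simp add: s2_Suc)
  then show ?case using step by linarith
qed

lemma s2_le1: "s2 m \<le> 1"
proof (cases "m \<ge> 1")
  case True
  have "s2 m + 1 / real m \<le> s2 1 + 1" using s2_tele[OF _ True] by simp
  moreover have "s2 1 = 0" by (simp add: s2_def)
  moreover have "1 / real m \<ge> 0" by simp
  ultimately show ?thesis by linarith
next
  case False then show ?thesis by (simp add: s2_def)
qed

definition sig :: real where "sig = Sup (range s2)"

lemma bdd_s2: "bdd_above (range s2)"
  using s2_le1 by (intro bdd_aboveI[where M=1]) auto

lemma s2_le_sig: "s2 n \<le> sig"
  unfolding sig_def using bdd_s2 by (intro cSup_upper) auto

lemma sig_le: assumes "n \<ge> 1" shows "sig \<le> s2 n + 1 / real n"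
  unfolding sig_def
proof (rule cSup_least)
  show "range s2 \<noteq> {}" by simp
next
  fix x assume "x \<in> range s2"
  then obtain m where x: "x = s2 m" by auto
  show "x \<le> s2 n + 1 / real n"
  proof (cases "m \<le> n")
    case True
    have "1 / real n \<ge> 0" by simp
    then show ?thesis using s2_mono[OF True] x by linarith
  next
    case False
    then have "s2 m + 1 / real m \<le> s2 n + 1 / real n" using s2_tele assms by simp
    moreover have "1 / real m \<ge> 0" by simp
    ultimately show ?thesis using x by linarith
  qed
qed

lemma s2_10: "s2 10 = 698249/1270080"
  by (simp add: s2_def numeral_eq_Suc)

lemma sig_bounds: "1/4 \<le> sig" "sig \<le> 65/100"
proof -
  have "s2 2 = 1/4" by (simp add: s2_def)
  then show "1/4 \<le> sig" using s2_le_sig[of 2] by simp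
  show "sig \<le> 65/100" using sig_le[of 10] s2_10 by simp
qed



abbreviation F :: "nat \<Rightarrow> real" where "F m \<equiv> real (P m)"

lemma gauss_real: "real (\<Sum>i = 1..n. i) = real n * (real n + 1) / 2"
  by (induction n) (auto simp: field_simps)

lemma F_rec:
  assumes "n \<ge> 1"
  shows "F n = real n * (real n + 1) / 2 - (\<Sum>d = 2..n. F (n div d))"
proof -
  have "(\<Sum>d = 1..n. P (n div d)) = P n + (\<Sum>d = 2..n. P (n div d))"
    using assms by (simp add: sum.atLeast_Suc_atMost numeral_2_eq_2)
  then have "real (\<Sum>i = 1..n. i) = F n + (\<Sum>d = 2..n. F (n div d))"
    using P_identity[of n] by (metis of_nat_add of_nat_sum)
  then show ?thesis using gauss_real[of n] by linarith
qed

lemma harm_ge1: "n \<ge> 1 \<Longrightarrow> harm n \<ge> (1::real)"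
  using harm_mono[of 1 n] by (simp add: harm_def)

lemma h1: "n \<ge> 1 \<Longrightarrow> (\<Sum>d = 2..n. 1 / real d) = harm n - 1"
  by (simp add: harm_def sum.atLeast_Suc_atMost divide_inverse numeral_2_eq_2)

lemma F_le: "F m \<le> real m ^ 2 / 2 + real m"
proof -
  have "P m \<le> (\<Sum>i = 1..m. i)" unfolding P_def by (intro sum_mono totient_le)
  then have "F m \<le> real (\<Sum>i = 1..m. i)" by linarith
  then show ?thesis using gauss_real[of m] by (simp add: field_simps power2_eq_square)
qed



lemma div_bounds:
  assumes d: "d \<in> {2..n}"
  shows "n div d \<ge> 1" "real (n div d) \<le> real n / real d" "real (n div d) \<ge> real n / real d - 1"
    "harm (n div d) \<le> (harm n :: real)"
proof -
  have d2: "d \<ge> 2" "d \<le> n" using d by auto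
  show "n div d \<ge> 1" using d2 by (simp add: div_greater_zero_iff Suc_le_eq)
  show "real (n div d) \<le> real n / real d" by (rule of_nat_div_le_of_nat)
  have e: "n = d * (n div d) + n mod d" by simp
  have f: "n mod d < d" using d2 by simp
  have "n < d * (n div d) + d" using e f by linarith
  then have "n < d * (n div d + 1)" by (simp add: algebra_simps)
  then have "real n < real (d * (n div d + 1))" by (simp only: of_nat_less_iff)
  then have "real n < real d * (real (n div d) + 1)" by (simp add: algebra_simps)
  then show "real (n div d) \<ge> real n / real d - 1" using d2 by (simp add: field_simps)
  show "harm (n div d) \<le> (harm n :: real)" by (intro harm_mono div_le_dividend)
qed

lemma lower_step:
  assumes u: "u \<ge> 0" and K: "K \<ge> 0"
    and hyp: "\<And>m. m \<ge> 1 \<Longrightarrow> F m \<le> u * real m ^ 2 / 2 + K * real m * harm m ^ j"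
    and n: "n \<ge> 1"
  shows "F n \<ge> (1 - sig * u) * real n ^ 2 / 2 - K * real n * harm n ^ Suc j"
proof -
  define A where "A = u * real n ^ 2 / 2"
  define B where "B = K * real n * harm n ^ j"
  have A0: "A \<ge> 0" using u by (simp add: A_def)
  have B0: "B \<ge> 0" using K by (simp add: B_def harm_nonneg)
  have each: "F (n div d) \<le> A * (1 / (real d)^2) + B * (1 / real d)" if d: "d \<in> {2..n}" for d
  proof -
    define m where "m = n div d"
    note db = div_bounds[OF d, folded m_def]
    have m0: "0 \<le> real m" by simp
    have x0: "0 \<le> real n / real d" by simp
    have hm0: "0 \<le> (harm m::real)" by (rule harm_nonneg)
    have p1: "real m ^ 2 \<le> (real n / real d) ^ 2" by (rule power_mono[OF db(2) m0])
    have p2: "harm m ^ j \<le> (harm n::real) ^ j" by (rule power_mono[OF db(4) hm0])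
    have p3: "real m * harm m ^ j \<le> (real n / real d) * harm n ^ j"
      by (rule mult_mono[OF db(2) p2 x0]) (simp add: hm0)
    have "F m \<le> u * real m ^ 2 / 2 + K * (real m * harm m ^ j)"
      using hyp[OF db(1)] by (simp add: mult.assoc)
    also have "\<dots> \<le> u * (real n / real d) ^ 2 / 2 + K * ((real n / real d) * harm n ^ j)"
      using mult_left_mono[OF p1 u] mult_left_mono[OF p3 K] by (intro add_mono divide_right_mono) auto
    also have "\<dots> = A * (1 / (real d)^2) + B * (1 / real d)"
      by (simp add: A_def B_def power_divide)
    finally show ?thesis by (simp add: m_def)
  qed
  have "(\<Sum>d = 2..n. F (n div d)) \<le> (\<Sum>d = 2..n. A * (1 / (real d)^2) + B * (1 / real d))"
    by (rule sum_mono) (rule each)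
  also have "\<dots> = A * s2 n + B * (harm n - 1)"
    by (simp only: sum.distrib sum_distrib_left[symmetric] s2_def h1[OF n])
  also have "\<dots> \<le> A * sig + B * harm n"
    using mult_left_mono[OF s2_le_sig A0, of n] mult_left_mono[of "harm n - 1" "harm n" B] B0
    by (intro add_mono) auto
  finally have S: "(\<Sum>d = 2..n. F (n div d)) \<le> A * sig + B * harm n" .
  have gen: "\<And>f t x y z :: real. f = t - x \<Longrightarrow> y \<le> t \<Longrightarrow> x \<le> z \<Longrightarrow> y - z \<le> f"
    by linarith
  have low: "real n ^ 2 / 2 \<le> real n * (real n + 1) / 2"
    by (simp add: power2_eq_square field_simps)
  have eq: "(1 - sig * u) * real n ^ 2 / 2 - K * real n * harm n ^ Suc j = real n ^ 2 / 2 - (A * sig + B * harm n)"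
    by (simp add: A_def B_def field_simps)
  show ?thesis unfolding eq by (rule gen[OF F_rec[OF n] low S])
qed

lemma upper_step:
  assumes l: "l \<ge> 0" "l \<le> 1" and K: "K \<ge> 0"
    and hyp: "\<And>m. m \<ge> 1 \<Longrightarrow> F m \<ge> l * real m ^ 2 / 2 - K * real m * harm m ^ j"
    and n: "n \<ge> 1"
  shows "F n \<le> (1 - sig * l) * real n ^ 2 / 2 + (K + 3) * real n * harm n ^ Suc j"
proof -
  define A where "A = l * real n ^ 2 / 2"
  define B where "B = K * real n * harm n ^ j"
  define C where "C = l * real n"
  have A0: "A \<ge> 0" using l by (simp add: A_def)
  have B0: "B \<ge> 0" using K by (simp add: B_def harm_nonneg)
  have C0: "C \<ge> 0" using l by (simp add: C_def)
  have each: "F (n div d) \<ge> A * (1 / (real d)^2) - C * (1 / real d) - B * (1 / real d)" if d: "d \<in> {2..n}" for d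
  proof -
    define m where "m = n div d"
    note db = div_bounds[OF d, folded m_def]
    have m0: "0 \<le> real m" by simp
    have x0: "0 \<le> real n / real d" by simp
    have hm0: "0 \<le> (harm m::real)" by (rule harm_nonneg)
    have q: "(real n / real d) ^ 2 - 2 * (real n / real d) \<le> real m ^ 2"
    proof -
      have "real n / real d - 1 \<ge> 0" using d by (simp add: field_simps)
      then have "(real n / real d - 1) ^ 2 \<le> real m ^ 2" using db(3) by (intro power_mono) auto
      then show ?thesis by (simp add: power2_eq_square algebra_simps)
    qed
    have p2: "harm m ^ j \<le> (harm n::real) ^ j" by (rule power_mono[OF db(4) hm0])
    have p3: "real m * harm m ^ j \<le> (real n / real d) * harm n ^ j"
      by (rule mult_mono[OF db(2) p2 x0]) (simp add: hm0)
    have "A * (1 / (real d)^2) - C * (1 / real d) - B * (1 / real d)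
        = l * ((real n / real d) ^ 2 - 2 * (real n / real d)) / 2 - K * ((real n / real d) * harm n ^ j)"
      by (simp add: A_def B_def C_def power_divide field_simps)
    also have "\<dots> \<le> l * real m ^ 2 / 2 - K * (real m * harm m ^ j)"
    proof (rule diff_mono)
      show "l * ((real n / real d) ^ 2 - 2 * (real n / real d)) / 2 \<le> l * real m ^ 2 / 2"
        by (rule divide_right_mono[OF mult_left_mono[OF q l(1)]]) simp
      show "K * (real m * harm m ^ j) \<le> K * ((real n / real d) * harm n ^ j)"
        by (rule mult_left_mono[OF p3 K])
    qed
    also have "\<dots> \<le> F m"
      using hyp[OF db(1)] by (simp add: mult.assoc)
    finally show ?thesis by (simp add: m_def)
  qed
  have le: "(\<Sum>d = 2..n. A * (1 / (real d)^2) - C * (1 / real d) - B * (1 / real d)) \<le> (\<Sum>d = 2..n. F (n div d))"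
    by (rule sum_mono) (rule each)
  have eq: "(\<Sum>d = 2..n. A * (1 / (real d)^2) - C * (1 / real d) - B * (1 / real d))
      = A * s2 n - C * (harm n - 1) - B * (harm n - 1)"
    by (simp only: sum_subtractf sum_distrib_left[symmetric] s2_def h1[OF n])
  have S: "A * s2 n - C * (harm n - 1) - B * (harm n - 1) \<le> (\<Sum>d = 2..n. F (n div d))"
    using le unfolding eq .
  have sg: "sig - 1 / real n \<le> s2 n" using sig_le[OF n] by simp
  have H1: "(harm n :: real) \<ge> 1" using harm_ge1[OF n] .
  have Hj: "(harm n :: real) ^ j \<ge> 1" using H1 by (simp add: one_le_power)
  have e1: "A * (sig - 1 / real n) \<le> A * s2 n" by (rule mult_left_mono[OF sg A0])
  have e2: "A * (sig - 1 / real n) = A * sig - l * real n / 2" using n by (simp add: A_def field_simps power2_eq_square)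
  have e3: "C * (harm n - 1) \<le> real n * harm n ^ Suc j"
  proof -
    have "C * (harm n - 1) \<le> real n * (harm n - 1)" using l n H1 by (simp add: C_def mult_right_mono)
    also have "\<dots> \<le> real n * harm n" by (intro mult_left_mono) auto
    also have "\<dots> = real n * (harm n * 1)" by simp
    also have "\<dots> \<le> real n * (harm n * harm n ^ j)"
      using Hj H1 by (intro mult_left_mono) auto
    finally show ?thesis by simp
  qed
  have e4: "B * (harm n - 1) \<le> K * real n * harm n ^ Suc j"
    using mult_left_mono[of "harm n - 1" "harm n" B] B0 by (simp add: B_def mult_ac)
  have e5: "real n / 2 + l * real n / 2 \<le> 2 * (real n * harm n ^ Suc j)"
  proof -
    have "l * real n \<le> 1 * real n" by (rule mult_right_mono) (use l in auto)
    then have "real n / 2 + l * real n / 2 \<le> real n" by simp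
    also have "\<dots> = real n * 1" by simp
    also have "\<dots> \<le> real n * harm n ^ Suc j" using H1
      by (intro mult_left_mono one_le_power) auto
    finally have "real n / 2 + l * real n / 2 \<le> real n * harm n ^ Suc j" .
    moreover have "0 \<le> real n * harm n ^ Suc j" by (simp add: harm_nonneg)
    ultimately show ?thesis by linarith
  qed
  define X where "X = (\<Sum>d = 2..n. F (n div d))"
  define W where "W = real n * harm n ^ Suc j"
  have Fn: "F n = real n ^ 2 / 2 + real n / 2 - X"
    using F_rec[OF n] by (simp add: X_def power2_eq_square field_simps)
  have S': "A * s2 n - C * (harm n - 1) - B * (harm n - 1) \<le> X" using S by (simp add: X_def)
  have goal_eq: "(1 - sig * l) * real n ^ 2 / 2 + (K + 3) * real n * harm n ^ Suc j
      = real n ^ 2 / 2 - A * sig + K * W + 3 * W"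
    by (simp add: A_def W_def algebra_simps add_divide_distrib diff_divide_distrib)
  have e4': "B * (harm n - 1) \<le> K * W" using e4 by (simp add: W_def)
  have e3': "C * (harm n - 1) \<le> W" using e3 by (simp add: W_def)
  have e5': "real n / 2 + l * real n / 2 \<le> 2 * W" using e5 by (simp add: W_def)
  have gen: "\<And>(fn::real) a b c d e f g h i. fn = a + b - c \<Longrightarrow> d - e - f \<le> c \<Longrightarrow> g \<le> d
     \<Longrightarrow> g = h - i \<Longrightarrow> e \<le> W \<Longrightarrow> f \<le> K * W \<Longrightarrow> b + i \<le> 2 * W \<Longrightarrow> fn \<le> a - h + K * W + 3 * W"
    by linarith
  have "F n \<le> real n ^ 2 / 2 - A * sig + K * W + 3 * W"
    by (rule gen[OF Fn S' e1 e2 e3' e4' e5'])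
  then show ?thesis using goal_eq by simp
qed



definition uk :: "nat \<Rightarrow> real" where "uk k = (1 + sig ^ (2 * k + 1)) / (1 + sig)"

lemma sig_pos: "0 < sig" "sig < 1" using sig_bounds by auto

lemma uk_range: "0 \<le> uk k" "uk k \<le> 1"
proof -
  have p: "sig ^ (2 * k + 1) \<le> sig"
  proof -
    have "sig ^ (2 * k) \<le> 1" using sig_pos by (intro power_le_one) auto
    then have "sig * sig ^ (2 * k) \<le> sig * 1" using sig_pos by (intro mult_left_mono) auto
    then show ?thesis by simp
  qed
  have q: "0 \<le> sig ^ (2 * k + 1)" using sig_pos by simp
  show "0 \<le> uk k" unfolding uk_def using sig_pos q by simp
  show "uk k \<le> 1" unfolding uk_def using sig_pos p by simp
qed

lemma l_range: "0 \<le> 1 - sig * uk k" "1 - sig * uk k \<le> 1"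
proof -
  have "sig * uk k \<le> 1 * 1" using sig_pos uk_range[of k] by (intro mult_mono) auto
  moreover have "0 \<le> sig * uk k" using sig_pos uk_range[of k] by simp
  ultimately show "0 \<le> 1 - sig * uk k" "1 - sig * uk k \<le> 1" by auto
qed

lemma uk_step: "1 - sig * (1 - sig * uk k) = uk (Suc k)"
proof -
  have ne: "1 + sig \<noteq> 0" using sig_pos by simp
  have "sig ^ (2 * Suc k + 1) = sig ^ 2 * sig ^ (2 * k + 1)" by (simp add: power_add[symmetric])
  then show ?thesis unfolding uk_def using ne
    by (simp add: field_simps power2_eq_square)
qed

lemma iter: "m \<ge> 1 \<Longrightarrow> F m \<le> uk k * real m ^ 2 / 2 + (1 + 3 * real k) * real m * harm m ^ (2 * k)"
proof (induction k arbitrary: m)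
  case 0
  have "uk 0 = 1" unfolding uk_def using sig_pos by simp
  then show ?case using F_le[of m] by simp
next
  case (Suc k)
  have K0: "0 \<le> 1 + 3 * real k" by simp
  have low: "\<And>n. n \<ge> 1 \<Longrightarrow> F n \<ge> (1 - sig * uk k) * real n ^ 2 / 2 - (1 + 3 * real k) * real n * harm n ^ Suc (2 * k)"
    by (rule lower_step[OF uk_range(1) K0 Suc.IH])
  have "F m \<le> (1 - sig * (1 - sig * uk k)) * real m ^ 2 / 2 + ((1 + 3 * real k) + 3) * real m * harm m ^ Suc (Suc (2 * k))"
    by (rule upper_step[OF l_range K0 low Suc.prems])
  then have calc: "F m \<le> uk (Suc k) * real m ^ 2 / 2 + ((1 + 3 * real k) + 3) * real m * harm m ^ Suc (Suc (2 * k))"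
    by (simp only: uk_step)
  have e1: "(1 + 3 * real k) + 3 = 1 + 3 * real (Suc k)" by simp
  have e2: "harm m ^ Suc (Suc (2 * k)) = (harm m :: real) ^ (2 * Suc k)" by simp
  show ?case using calc unfolding e1 e2 .
qed

lemma harm_le_ln: "n \<ge> 1 \<Longrightarrow> harm n \<le> 1 + ln (real n)"
  using euler_mascheroni_sequence_decreasing[of 1 n] by (simp add: harm_def)

lemma final_lower: "n \<ge> 1 \<Longrightarrow> F n \<ge> 301 / 1000 * real n ^ 2 - 16 * real n * (1 + ln (real n)) ^ 11"
proof -
  assume n: "n \<ge> 1"
  have K0: "0 \<le> 1 + 3 * real (5::nat)" by simp
  have it: "\<And>m. m \<ge> 1 \<Longrightarrow> F m \<le> uk 5 * real m ^ 2 / 2 + (1 + 3 * real (5::nat)) * real m * harm m ^ (2 * 5)"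
    by (rule iter)
  have "F n \<ge> (1 - sig * uk 5) * real n ^ 2 / 2 - (1 + 3 * real (5::nat)) * real n * harm n ^ Suc (2 * 5)"
    by (rule lower_step[OF uk_range(1) K0 it n])
  then have L: "F n \<ge> (1 - sig * uk 5) * real n ^ 2 / 2 - 16 * real n * harm n ^ 11" by simp
  have p12: "sig * sig ^ 11 = sig ^ 12" by (simp add: numeral_eq_Suc)
  have c: "1 - sig * uk 5 = (1 - sig ^ 12) / (1 + sig)"
    unfolding uk_def using sig_pos p12 by (simp add: field_simps)
  have s12: "sig ^ 12 \<le> (65/100) ^ 12" using sig_pos sig_bounds by (intro power_mono) auto
  have n12: "(65/100::real) ^ 12 \<le> 6/1000" by (simp add: power_divide)
  have s12': "sig ^ 12 \<le> 6/1000" using s12 n12 by (rule order_trans)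
  have dd: "(602/1000) * (1 + sig) = 602/1000 + 602/1000 * sig" by (simp add: algebra_simps)
  have "(602/1000) * (1 + sig) \<le> 1 - sig ^ 12" unfolding dd using s12' sig_bounds by linarith
  then have c2: "602/1000 \<le> 1 - sig * uk 5" unfolding c using sig_pos by (simp add: le_divide_eq)
  have "602/1000 * real n ^ 2 \<le> (1 - sig * uk 5) * real n ^ 2" by (rule mult_right_mono[OF c2]) simp
  then have A: "301/1000 * real n ^ 2 \<le> (1 - sig * uk 5) * real n ^ 2 / 2" by simp
  have "harm n ^ 11 \<le> (1 + ln (real n)) ^ 11"
    using harm_le_ln[OF n] by (intro power_mono) (auto simp: harm_nonneg)
  then have B: "16 * real n * harm n ^ 11 \<le> 16 * real n * (1 + ln (real n)) ^ 11"
    by (intro mult_left_mono) auto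
  show ?thesis using L A B by linarith
qed

lemma final_upper: "n \<ge> 1 \<Longrightarrow> F n \<le> 41 / 100 * real n ^ 2 + 4 * real n * (1 + ln (real n)) ^ 2"
proof -
  assume n: "n \<ge> 1"
  have it: "F n \<le> uk 1 * real n ^ 2 / 2 + (1 + 3 * real (1::nat)) * real n * harm n ^ (2 * 1)"
    by (rule iter[OF n])
  then have L: "F n \<le> uk 1 * real n ^ 2 / 2 + 4 * real n * harm n ^ 2" by simp
  have c: "uk 1 = 1 - sig + sig ^ 2"
    unfolding uk_def using sig_pos by (simp add: field_simps power2_eq_square power3_eq_cube)
  have "(sig - 1/4) * (sig - 65/100) \<le> 0" using sig_bounds by (intro mult_nonneg_nonpos) auto
  moreover have "sig ^ 2 - 9/10 * sig + 1625/10000 = (sig - 1/4) * (sig - 65/100)"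
    by (simp add: power2_eq_square field_simps)
  ultimately have "sig ^ 2 \<le> 9/10 * sig - 1625/10000" by linarith
  then have c2: "uk 1 \<le> 82/100" unfolding c using sig_bounds by simp
  have "uk 1 * real n ^ 2 \<le> 82/100 * real n ^ 2" by (rule mult_right_mono[OF c2]) simp
  then have A: "uk 1 * real n ^ 2 / 2 \<le> 41/100 * real n ^ 2" by simp
  have "harm n ^ 2 \<le> (1 + ln (real n)) ^ 2"
    using harm_le_ln[OF n] by (intro power_mono) (auto simp: harm_nonneg)
  then have B: "4 * real n * harm n ^ 2 \<le> 4 * real n * (1 + ln (real n)) ^ 2"
    by (intro mult_left_mono) auto
  show ?thesis using L A B by linarith
qed

lemma ev_lower: "eventually (\<lambda>n. 3/10 * real n ^ 2 < F n) sequentially"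
proof -
  have "eventually (\<lambda>n::nat. 16 * real n * (1 + ln (real n)) ^ 11 < 1/1000 * real n ^ 2) sequentially"
    by real_asymp
  moreover have "eventually (\<lambda>n::nat. n \<ge> 1) sequentially" by (rule eventually_ge_at_top)
  ultimately show ?thesis
  proof eventually_elim
    case (elim n)
    then show ?case using final_lower[of n] by linarith
  qed
qed

lemma ev_upper: "eventually (\<lambda>n. F n < real n * (real n - 1) / 2) sequentially"
proof -
  have "eventually (\<lambda>n::nat. 41 / 100 * real n ^ 2 + 4 * real n * (1 + ln (real n)) ^ 2 < real n * (real n - 1) / 2) sequentially"
    by real_asymp
  moreover have "eventually (\<lambda>n::nat. n \<ge> 1) sequentially" by (rule eventually_ge_at_top)
  ultimately show ?thesis
  proof eventually_elim
    case (elim n)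
    then show ?case using final_upper[of n] by linarith
  qed
qed


lemma size_real:
  assumes "n \<ge> 1"
  shows "real (size_seq Qpos_arr n) = (real n + 1) * F n"
proof -
  have "size_seq Qpos_arr n = (n + 1) * P n" using size_Q[OF assms] by (simp add: size_I P_def)
  then show ?thesis by (simp add: algebra_simps)
qed

theorem theorem11:
  shows "(\<forall>n\<ge>1. size_seq Qpos_arr n = (n + 1) * size_seq I_arr n)
    \<and> (\<forall>n\<ge>1. size_seq Qpos_arr n = (n + 1) * (\<Sum>i = 1..n. totient i))
    \<and> F_approx (\<lambda>n. real (size_seq Qpos_arr n)) (\<lambda>n. real n ^ 3)
    \<and> F_less (\<lambda>n. 3 / 10 * (real n ^ 3 + real n ^ 2)) (\<lambda>n. real (size_seq Qpos_arr n))
    \<and> F_less (\<lambda>n. real (size_seq Qpos_arr n)) (\<lambda>n. (real n ^ 3 - real n) / 2)"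
proof -
  have A: "\<forall>n\<ge>1. size_seq Qpos_arr n = (n + 1) * size_seq I_arr n" using size_Q by blast
  have B: "\<forall>n\<ge>1. size_seq Qpos_arr n = (n + 1) * (\<Sum>i = 1..n. totient i)" using size_Q size_I by simp
  have ge1: "eventually (\<lambda>n::nat. n \<ge> 1) sequentially" by (rule eventually_ge_at_top)
  have L: "eventually (\<lambda>n. 3 / 10 * (real n ^ 3 + real n ^ 2) < real (size_seq Qpos_arr n)) sequentially"
    using ev_lower ge1
  proof eventually_elim
    case (elim n)
    have ineq: "(real n + 1) * (3/10 * real n ^ 2) < (real n + 1) * F n"
      using elim(1) by (intro mult_strict_left_mono) auto
    have eq: "3 / 10 * (real n ^ 3 + real n ^ 2) = (real n + 1) * (3/10 * real n ^ 2)"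
      by (simp add: algebra_simps power2_eq_square power3_eq_cube)
    show ?case unfolding eq size_real[OF elim(2)] by (rule ineq)
  qed
  have U: "eventually (\<lambda>n. real (size_seq Qpos_arr n) < (real n ^ 3 - real n) / 2) sequentially"
    using ev_upper ge1
  proof eventually_elim
    case (elim n)
    have ineq: "(real n + 1) * F n < (real n + 1) * (real n * (real n - 1) / 2)"
      using elim(1) by (intro mult_strict_left_mono) auto
    have eq: "(real n ^ 3 - real n) / 2 = (real n + 1) * (real n * (real n - 1) / 2)"
      by (simp add: algebra_simps power2_eq_square power3_eq_cube)
    show ?case unfolding eq size_real[OF elim(2)] by (rule ineq)
  qed
  have ap1: "eventually (\<lambda>n. 4 * real (size_seq Qpos_arr n) \<ge> real n ^ 3) sequentially"
    using L
  proof eventually_elim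
    case (elim n)
    have "0 \<le> real n ^ 3" "0 \<le> real n ^ 2" by simp_all
    moreover have "3 / 10 * (real n ^ 3 + real n ^ 2) = 3 / 10 * real n ^ 3 + 3 / 10 * real n ^ 2"
      by (simp add: algebra_simps)
    ultimately show ?case using elim by linarith
  qed
  have ap2: "eventually (\<lambda>n. real n ^ 3 \<ge> real (size_seq Qpos_arr n)) sequentially"
    using U
  proof eventually_elim
    case (elim n)
    have "0 \<le> real n ^ 3" "0 \<le> real n" by simp_all
    moreover have "(real n ^ 3 - real n) / 2 = real n ^ 3 / 2 - real n / 2"
      by (simp add: field_simps)
    ultimately show ?case using elim by linarith
  qed
  have "F_approx (\<lambda>n. real (size_seq Qpos_arr n)) (\<lambda>n. real n ^ 3)"
    unfolding F_approx_def
  proof (intro conjI)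
    show "\<exists>k::nat. k \<ge> 1 \<and> (\<forall>\<^sub>F n in sequentially. real k * real (size_seq Qpos_arr n) \<ge> real n ^ 3)"
      using ap1 by (intro exI[of _ 4]) simp
    show "\<exists>k::nat. k \<ge> 1 \<and> (\<forall>\<^sub>F n in sequentially. real k * real n ^ 3 \<ge> real (size_seq Qpos_arr n))"
      using ap2 by (intro exI[of _ 1]) simp
  qed
  then show ?thesis using A B L U unfolding F_less_def by blast
qed

end
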